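(* Let $\mathcal{B}$ be a $\sigma$-algebra on a nonempty set $E$. Every $\sigma$-maxitive measure of bounded variation on $\mathcal{B}$ is finite and essential.
   Context: A $\sigma$-maxitive measure on $\mathcal{B}$ is a map $\nu:\mathcal{B}\to[0,\infty]$ with $\nu(\emptyset)=0$, $\nu(B\cup B')=\max(\nu(B),\nu(B'))$ for all $B,B'\in\mathcal{B}$, and $\nu(\bigcup_nB_n)=\lim_n\nu(B_n)$ for every nondecreasing sequence $(B_n)$ in $\mathcal{B}$. It is of bounded variation if $|\nu|:=\sup_\pi\sum_{B\in\pi}\nu(B)<\infty$, the supremum being over all finite partitions $\pi$ of $E$ into elements of $\mathcal{B}$. It is finite if $\nu(B)<\infty$ for all $B\in\mathcal{B}$, and essential if there is a $\sigma$-finite $\sigma$-additive measure $m$ on $\mathcal{B}$ with $\nu(B)>0\iff m(B)>0$ for all $B\in\mathcal{B}$. *)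

theory Defs
  imports "HOL-Analysis.Analysis"
begin

definition sigma_maxitive :: "'a set \<Rightarrow> 'a set set \<Rightarrow> ('a set \<Rightarrow> ennreal) \<Rightarrow> bool" where
  "sigma_maxitive E \<B> \<nu> \<longleftrightarrow>
     \<nu> {} = 0 \<and>
     (\<forall>B\<in>\<B>. \<forall>B'\<in>\<B>. \<nu> (B \<union> B') = max (\<nu> B) (\<nu> B')) \<and>
     (\<forall>Bs :: nat \<Rightarrow> 'a set. range Bs \<subseteq> \<B> \<longrightarrow> incseq Bs \<longrightarrow>
        (\<lambda>n. \<nu> (Bs n)) \<longlonglongrightarrow> \<nu> (\<Union>n. Bs n))"

definition finite_partitions :: "'a set \<Rightarrow> 'a set set \<Rightarrow> 'a set set set" where
  "finite_partitions E \<B> =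
     {\<pi>. finite \<pi> \<and> \<pi> \<subseteq> \<B> \<and> disjoint \<pi> \<and> \<Union>\<pi> = E}"

definition total_variation :: "'a set \<Rightarrow> 'a set set \<Rightarrow> ('a set \<Rightarrow> ennreal) \<Rightarrow> ennreal" where
  "total_variation E \<B> \<nu> = (SUP \<pi>\<in>finite_partitions E \<B>. \<Sum>B\<in>\<pi>. \<nu> B)"

definition bounded_variation :: "'a set \<Rightarrow> 'a set set \<Rightarrow> ('a set \<Rightarrow> ennreal) \<Rightarrow> bool" where
  "bounded_variation E \<B> \<nu> \<longleftrightarrow> total_variation E \<B> \<nu> < \<infinity>"

definition finite_maxitive :: "'a set set \<Rightarrow> ('a set \<Rightarrow> ennreal) \<Rightarrow> bool" where
  "finite_maxitive \<B> \<nu> \<longleftrightarrow> (\<forall>B\<in>\<B>. \<nu> B < \<infinity>)"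

definition essential :: "'a set \<Rightarrow> 'a set set \<Rightarrow> ('a set \<Rightarrow> ennreal) \<Rightarrow> bool" where
  "essential E \<B> \<nu> \<longleftrightarrow>
     (\<exists>m. measure_space E \<B> m \<and> sigma_finite_measure (measure_of E \<B> m) \<and>
          (\<forall>B\<in>\<B>. \<nu> B > 0 \<longleftrightarrow> m B > 0))"

end

theory Submission
  imports Defs
begin

locale smv =
  fixes E :: "'a set" and \<B> :: "'a set set" and \<nu> :: "'a set \<Rightarrow> ennreal"
  assumes sa: "sigma_algebra E \<B>"
    and sm: "sigma_maxitive E \<B> \<nu>"
    and bv: "bounded_variation E \<B> \<nu>"
begin

interpretation S: sigma_algebra E \<B> by (rule sa)

lemma nu_empty: "\<nu> {} = 0" using sm by (simp add: sigma_maxitive_def)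

lemma nu_Un: "B \<in> \<B> \<Longrightarrow> B' \<in> \<B> \<Longrightarrow> \<nu> (B \<union> B') = max (\<nu> B) (\<nu> B')"
  using sm by (simp add: sigma_maxitive_def)

lemma nu_lim: "range Bs \<subseteq> \<B> \<Longrightarrow> incseq Bs \<Longrightarrow> (\<lambda>n. \<nu> (Bs n)) \<longlonglongrightarrow> \<nu> (\<Union>n. Bs n)"
  using sm by (simp add: sigma_maxitive_def)

lemma nu_mono: assumes "B \<in> \<B>" "B' \<in> \<B>" "B \<subseteq> B'" shows "\<nu> B \<le> \<nu> B'"
proof -
  have "B' = B \<union> (B' - B)" using assms by auto
  hence "\<nu> B' = max (\<nu> B) (\<nu> (B' - B))" using nu_Un assms by (metis S.Diff)
  thus ?thesis by simp
qed

abbreviation "TV \<equiv> total_variation E \<B> \<nu>"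

lemma TV_fin: "TV < \<infinity>" using bv by (simp add: bounded_variation_def)

lemma sum_le_TV:
  assumes F: "finite F" "F \<subseteq> \<B>" "disjoint F"
  shows "(\<Sum>C\<in>F. \<nu> C) \<le> TV"
proof -
  define R where "R = E - \<Union>F"
  have R: "R \<in> \<B>" unfolding R_def using F by (intro S.Diff S.top S.finite_Union) auto
  have sub: "\<And>C. C \<in> F \<Longrightarrow> C \<subseteq> E" using F S.sets_into_space by auto
  let ?p = "insert R F"
  have "?p \<in> finite_partitions E \<B>"
    unfolding finite_partitions_def
  proof (intro CollectI conjI)
    show "finite ?p" "?p \<subseteq> \<B>" using F R by auto
    show "\<Union>?p = E" using sub unfolding R_def by auto
    show "disjoint ?p" using F(3) unfolding disjoint_def R_def by auto
  qed
  hence "(\<Sum>C\<in>?p. \<nu> C) \<le> TV" unfolding total_variation_def by (rule SUP_upper)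
  moreover have "(\<Sum>C\<in>F. \<nu> C) \<le> (\<Sum>C\<in>?p. \<nu> C)"
    by (rule sum_mono2) (use F in auto)
  ultimately show ?thesis by simp
qed

lemma finite_nu: "B \<in> \<B> \<Longrightarrow> \<nu> B < \<infinity>"
proof -
  assume B: "B \<in> \<B>"
  have "\<nu> B \<le> \<nu> E" using nu_mono[OF B S.top] S.sets_into_space B by auto
  also have "\<nu> E \<le> TV" using sum_le_TV[of "{E}"] by (simp add: disjoint_def)
  finally show ?thesis using TV_fin by auto
qed

definition D :: "real \<Rightarrow> 'a set \<Rightarrow> 'a set set set" where
  "D e X = {F. finite F \<and> F \<subseteq> \<B> \<and> disjoint F \<and> (\<forall>C\<in>F. C \<subseteq> X \<and> ennreal e < \<nu> C)}"

definition Kb :: "real \<Rightarrow> nat" where "Kb e = nat \<lceil>enn2real TV / e\<rceil>"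

definition p :: "real \<Rightarrow> 'a set \<Rightarrow> nat" where "p e X = Max (card ` D e X)"

lemma card_le_Kb: assumes e: "e > 0" and F: "F \<in> D e X" shows "card F \<le> Kb e"
proof -
  obtain t where t: "TV = ennreal t" "t \<ge> 0" using TV_fin by (cases TV) auto
  have F': "finite F" "F \<subseteq> \<B>" "disjoint F" "\<And>C. C \<in> F \<Longrightarrow> ennreal e < \<nu> C"
    using F by (auto simp: D_def)
  have "ennreal (real (card F) * e) = (\<Sum>C\<in>F. ennreal e)"
    using e by (simp add: ennreal_mult ennreal_of_nat_eq_real_of_nat)
  also have "\<dots> \<le> (\<Sum>C\<in>F. \<nu> C)" by (intro sum_mono less_imp_le F')
  also have "\<dots> \<le> TV" by (rule sum_le_TV) (use F' in auto)
  finally have "real (card F) * e \<le> t" using t e by (simp add: ennreal_le_iff)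
  hence "real (card F) \<le> t / e" using e by (simp add: field_simps)
  hence "real (card F) \<le> real_of_int \<lceil>t / e\<rceil>" by linarith
  thus ?thesis unfolding Kb_def using t by (simp add: le_nat_iff)
qed

lemma D_empty: "{} \<in> D e X" by (simp add: D_def)

lemma fin_cards: "e > 0 \<Longrightarrow> finite (card ` D e X)"
  by (rule finite_subset[of _ "{..Kb e}"]) (auto dest: card_le_Kb)

lemma card_le_p: "e > 0 \<Longrightarrow> F \<in> D e X \<Longrightarrow> card F \<le> p e X"
  unfolding p_def by (rule Max_ge) (auto simp: fin_cards)

lemma p_ex: "e > 0 \<Longrightarrow> \<exists>F\<in>D e X. card F = p e X"
proof -
  assume "e > 0"
  have "p e X \<in> card ` D e X" unfolding p_def
  proof (rule Max_in)
    show "finite (card ` D e X)" using fin_cards[OF \<open>e > 0\<close>] .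
    show "card ` D e X \<noteq> {}" using D_empty[of e X] by blast
  qed
  thus ?thesis by auto
qed

lemma p_le_Kb: "e > 0 \<Longrightarrow> p e X \<le> Kb e"
  using p_ex card_le_Kb by metis

lemma D_mono: "X \<subseteq> Y \<Longrightarrow> D e X \<subseteq> D e Y" by (auto simp: D_def)

lemma p_mono: "e > 0 \<Longrightarrow> X \<subseteq> Y \<Longrightarrow> p e X \<le> p e Y"
  using p_ex card_le_p D_mono by (metis subsetD)

lemma p_pos_iff: assumes e: "e > 0" and X: "X \<in> \<B>" shows "p e X > 0 \<longleftrightarrow> ennreal e < \<nu> X"
proof
  assume "p e X > 0"
  then obtain F where F: "F \<in> D e X" "card F > 0" using p_ex[OF e, of X] by auto
  then obtain C where "C \<in> F" by fastforce
  hence "ennreal e < \<nu> C" "C \<subseteq> X" "C \<in> \<B>" using F by (auto simp: D_def)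
  thus "ennreal e < \<nu> X" using nu_mono[OF _ X] by (meson order_less_le_trans)
next
  assume "ennreal e < \<nu> X"
  hence "{X} \<in> D e X" using X by (auto simp: D_def disjoint_def)
  from card_le_p[OF e this] show "p e X > 0" by simp
qed

lemma p_empty: "e > 0 \<Longrightarrow> p e {} = 0"
  using p_pos_iff[of e "{}"] nu_empty by auto

lemma p_add:
  assumes e: "e > 0" and X: "X \<in> \<B>" and Y: "Y \<in> \<B>" and XY: "X \<inter> Y = {}"
  shows "p e (X \<union> Y) = p e X + p e Y"
proof (rule antisym)
  obtain F1 where F1: "F1 \<in> D e X" "card F1 = p e X" using p_ex[OF e] by blast
  obtain F2 where F2: "F2 \<in> D e Y" "card F2 = p e Y" using p_ex[OF e] by blast
  have ne: "\<And>C. ennreal e < \<nu> C \<Longrightarrow> C \<noteq> {}" using nu_empty by auto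
  have dis: "F1 \<inter> F2 = {}"
  proof (rule ccontr)
    assume "F1 \<inter> F2 \<noteq> {}"
    then obtain C where "C \<in> F1" "C \<in> F2" by auto
    hence "C \<subseteq> X" "C \<subseteq> Y" "ennreal e < \<nu> C" using F1 F2 by (auto simp: D_def)
    thus False using XY ne by blast
  qed
  have d1: "disjoint F1" "\<And>C. C \<in> F1 \<Longrightarrow> C \<subseteq> X" using F1(1) by (auto simp: D_def)
  have d2: "disjoint F2" "\<And>C. C \<in> F2 \<Longrightarrow> C \<subseteq> Y" using F2(1) by (auto simp: D_def)
  have dj: "disjoint (F1 \<union> F2)"
  proof (rule pairwiseI)
    fix a b assume ab: "a \<in> F1 \<union> F2" "b \<in> F1 \<union> F2" "a \<noteq> b"
    consider "a \<in> F1" "b \<in> F1" | "a \<in> F2" "b \<in> F2" | "a \<in> F1" "b \<in> F2" | "a \<in> F2" "b \<in> F1"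
      using ab by blast
    then show "disjnt a b"
    proof cases
      case 1 thus ?thesis using d1(1) ab(3) by (simp add: pairwiseD)
    next
      case 2 thus ?thesis using d2(1) ab(3) by (simp add: pairwiseD)
    next
      case 3 thus ?thesis using d1(2) d2(2) XY unfolding disjnt_def by blast
    next
      case 4 thus ?thesis using d1(2) d2(2) XY unfolding disjnt_def by blast
    qed
  qed
  have "F1 \<union> F2 \<in> D e (X \<union> Y)"
    using F1(1) F2(1) dj unfolding D_def by auto
  from card_le_p[OF e this] show "p e X + p e Y \<le> p e (X \<union> Y)"
    using F1 F2 dis card_Un_disjoint[of F1 F2] by (simp add: D_def)
next
  obtain F where F: "F \<in> D e (X \<union> Y)" "card F = p e (X \<union> Y)" using p_ex[OF e] by blast
  have F': "finite F" "F \<subseteq> \<B>" "disjoint F" "\<And>C. C \<in> F \<Longrightarrow> C \<subseteq> X \<union> Y \<and> ennreal e < \<nu> C"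
    using F by (auto simp: D_def)
  have gen: "card {C\<in>F. ennreal e < \<nu> (C \<inter> Z)} \<le> p e Z" if Z: "Z \<in> \<B>" for Z
  proof -
    let ?G = "{C\<in>F. ennreal e < \<nu> (C \<inter> Z)}"
    have inj: "inj_on (\<lambda>C. C \<inter> Z) ?G"
    proof (rule inj_onI)
      fix C C' assume C: "C \<in> ?G" "C' \<in> ?G" "C \<inter> Z = C' \<inter> Z"
      have "C \<inter> Z \<noteq> {}" using C(1) nu_empty by auto
      show "C = C'"
      proof (rule ccontr)
        assume "C \<noteq> C'"
        hence "disjnt C C'" using F'(3) C(1,2) by (simp add: pairwiseD)
        thus False using C(3) \<open>C \<inter> Z \<noteq> {}\<close> unfolding disjnt_def by blast
      qed
    qed
    have "(\<lambda>C. C \<inter> Z) ` ?G \<in> D e Z"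
      unfolding D_def
    proof (intro CollectI conjI)
      show "finite ((\<lambda>C. C \<inter> Z) ` ?G)" using F' by auto
      show "(\<lambda>C. C \<inter> Z) ` ?G \<subseteq> \<B>" using F' Z by auto
      show "disjoint ((\<lambda>C. C \<inter> Z) ` ?G)"
      proof (rule pairwiseI)
        fix a b assume "a \<in> (\<lambda>C. C \<inter> Z) ` ?G" "b \<in> (\<lambda>C. C \<inter> Z) ` ?G" "a \<noteq> b"
        then obtain C C' where "C \<in> F" "C' \<in> F" "a = C \<inter> Z" "b = C' \<inter> Z" "C \<noteq> C'" by auto
        moreover have "disjnt C C'" using F'(3) \<open>C \<in> F\<close> \<open>C' \<in> F\<close> \<open>C \<noteq> C'\<close>
          by (simp add: pairwiseD)
        ultimately show "disjnt a b" unfolding disjnt_def by blast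
      qed
      show "\<forall>C\<in>(\<lambda>C. C \<inter> Z) ` ?G. C \<subseteq> Z \<and> ennreal e < \<nu> C" by auto
    qed
    from card_le_p[OF e this] show ?thesis using card_image[OF inj] by simp
  qed
  have "F = {C\<in>F. ennreal e < \<nu> (C \<inter> X)} \<union> {C\<in>F. ennreal e < \<nu> (C \<inter> Y)}"
  proof safe
    fix C assume C: "C \<in> F" "\<not> ennreal e < \<nu> (C \<inter> Y)"
    have "C = (C \<inter> X) \<union> (C \<inter> Y)" using F'(4)[OF C(1)] by auto
    hence "\<nu> C = max (\<nu> (C \<inter> X)) (\<nu> (C \<inter> Y))" using nu_Un F'(2) C(1) X Y
      by (metis S.Int subsetD)
    thus "ennreal e < \<nu> (C \<inter> X)" using F'(4)[OF C(1)] C(2) by (auto simp: less_max_iff_disj)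
  qed
  hence "card F \<le> card {C\<in>F. ennreal e < \<nu> (C \<inter> X)} + card {C\<in>F. ennreal e < \<nu> (C \<inter> Y)}"
    by (metis card_Un_le)
  also have "\<dots> \<le> p e X + p e Y" using gen[OF X] gen[OF Y] by simp
  finally show "p e (X \<union> Y) \<le> p e X + p e Y" using F by simp
qed

lemma exists_small:
  assumes e: "e > 0" and A: "range A \<subseteq> \<B>" "decseq A" "(\<Inter>i. A i) = {}"
  shows "\<exists>N. \<nu> (A N) \<le> ennreal e"
proof (rule ccontr)
  assume "\<not> ?thesis"
  hence big: "\<And>N. ennreal e < \<nu> (A N)" by (simp add: not_le)
  have AB: "\<And>i. A i \<in> \<B>" using A by auto
  have ex: "\<exists>M. ennreal e < \<nu> (A N - A M)" for N
  proof -
    have inc: "incseq (\<lambda>M. A N - A M)" using A(2) unfolding incseq_def decseq_def by auto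
    have un: "(\<Union>M. A N - A M) = A N" using A(3) by auto
    have "(\<lambda>M. \<nu> (A N - A M)) \<longlonglongrightarrow> \<nu> (A N)"
      using nu_lim[OF _ inc] AB un by auto
    from order_tendstoD(1)[OF this big] obtain M where "ennreal e < \<nu> (A N - A M)"
      by (auto simp: eventually_sequentially)
    thus ?thesis ..
  qed
  define g where "g N = (SOME M. ennreal e < \<nu> (A N - A M))" for N
  have gp: "ennreal e < \<nu> (A N - A (g N))" for N
    unfolding g_def by (rule someI_ex) (rule ex)
  have ggt: "N < g N" for N
  proof (rule ccontr)
    assume "\<not> N < g N"
    hence "A N \<subseteq> A (g N)" using A(2) by (simp add: decseq_def)
    hence "A N - A (g N) = {}" by auto
    hence "\<nu> (A N - A (g N)) = 0" using nu_empty by metis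
    thus False using gp[of N] by simp
  qed
  define s where "s k = (g ^^ k) 0" for k
  have sS: "s (Suc k) = g (s k)" for k by (simp add: s_def)
  have smono: "strict_mono s" unfolding strict_mono_Suc_iff using sS ggt by simp
  define Dk where "Dk k = A (s k) - A (s (Suc k))" for k
  have Dkp: "ennreal e < \<nu> (Dk k)" for k unfolding Dk_def using gp sS by simp
  have Dkne: "Dk k \<noteq> {}" for k using Dkp[of k] nu_empty by auto
  have dlt: "Dk k \<inter> Dk l = {}" if "k < l" for k l
  proof -
    have "s (Suc k) \<le> s l" using that smono strict_mono_less_eq by fastforce
    hence "A (s l) \<subseteq> A (s (Suc k))" using A(2) by (simp add: decseq_def)
    thus ?thesis unfolding Dk_def by auto
  qed
  have dne: "Dk k \<inter> Dk l = {}" if "k \<noteq> l" for k l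
    using dlt[of k l] dlt[of l k] that by (cases "k < l") (auto simp: Int_commute)
  have inj: "inj_on Dk {..<Suc (Kb e)}"
  proof (rule inj_onI)
    fix k l assume "Dk k = Dk l"
    thus "k = l" using dne[of k l] Dkne[of k] by auto
  qed
  have "Dk ` {..<Suc (Kb e)} \<in> D e E"
    unfolding D_def
  proof (intro CollectI conjI)
    show "finite (Dk ` {..<Suc (Kb e)})" by simp
    show "Dk ` {..<Suc (Kb e)} \<subseteq> \<B>" using AB unfolding Dk_def by auto
    show "disjoint (Dk ` {..<Suc (Kb e)})"
    proof (rule pairwiseI)
      fix a b assume "a \<in> Dk ` {..<Suc (Kb e)}" "b \<in> Dk ` {..<Suc (Kb e)}" "a \<noteq> b"
      then obtain k l where "a = Dk k" "b = Dk l" "k \<noteq> l" by auto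
      thus "disjnt a b" using dne unfolding disjnt_def by auto
    qed
    show "\<forall>C\<in>Dk ` {..<Suc (Kb e)}. C \<subseteq> E \<and> ennreal e < \<nu> C"
      using Dkp AB S.sets_into_space unfolding Dk_def by auto
  qed
  from card_le_Kb[OF e this] show False using card_image[OF inj] by simp
qed

lemma p_cont:
  assumes e: "e > 0" and A: "range A \<subseteq> \<B>" "decseq A" "(\<Inter>i. A i) = {}"
  shows "(\<lambda>i. of_nat (p e (A i)) :: ennreal) \<longlonglongrightarrow> 0"
proof -
  obtain N where N: "\<nu> (A N) \<le> ennreal e" using exists_small[OF assms] by blast
  have "p e (A i) = 0" if "i \<ge> N" for i
  proof -
    have Ai: "A i \<in> \<B>" using A by auto
    have "\<nu> (A i) \<le> \<nu> (A N)" using A that by (intro nu_mono) (auto simp: decseq_def)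
    hence "\<not> ennreal e < \<nu> (A i)" using N by (simp add: not_less order_trans)
    thus ?thesis using p_pos_iff[OF e Ai] by simp
  qed
  hence "eventually (\<lambda>i. (of_nat (p e (A i)) :: ennreal) = 0) sequentially"
    by (auto simp: eventually_sequentially)
  thus ?thesis by (rule tendsto_eventually)
qed

lemma p_ca: assumes e: "e > 0" shows "countably_additive \<B> (\<lambda>X. of_nat (p e X) :: ennreal)"
proof (rule S.empty_continuous_imp_countably_additive)
  show "positive \<B> (\<lambda>X. of_nat (p e X) :: ennreal)" using p_empty[OF e] by (simp add: positive_def)
  show "additive \<B> (\<lambda>X. of_nat (p e X) :: ennreal)" using p_add[OF e] by (simp add: additive_def)
  show "\<forall>A\<in>\<B>. (of_nat (p e A) :: ennreal) \<noteq> \<infinity>" by simp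
qed (rule p_cont[OF e])

lemma suminf_swap_ennreal:
  fixes f :: "nat \<Rightarrow> nat \<Rightarrow> ennreal"
  shows "(\<Sum>i. \<Sum>n. f i n) = (\<Sum>n. \<Sum>i. f i n)"
proof -
  have "(\<Sum>i. \<Sum>n. f i n) = (\<Sum>i. \<integral>\<^sup>+n. f i n \<partial>count_space UNIV)"
    by (simp add: nn_integral_count_space_nat)
  also have "\<dots> = (\<integral>\<^sup>+n. (\<Sum>i. f i n) \<partial>count_space UNIV)"
    by (rule nn_integral_suminf[symmetric]) auto
  also have "\<dots> = (\<Sum>n. \<Sum>i. f i n)" by (simp add: nn_integral_count_space_nat)
  finally show ?thesis .
qed

definition ep :: "nat \<Rightarrow> real" where "ep n = inverse (real (Suc n))"
definition w :: "nat \<Rightarrow> real" where "w n = (1/2)^n / (real (Kb (ep n)) + 1)"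
definition m :: "'a set \<Rightarrow> ennreal" where
  "m X = (\<Sum>n. ennreal (w n) * of_nat (p (ep n) X))"

lemma ep_pos: "ep n > 0" by (simp add: ep_def)
lemma w_pos: "w n > 0" by (simp add: w_def)

lemma m_ca: "countably_additive \<B> m"
  unfolding countably_additive_def
proof (intro allI impI)
  fix A :: "nat \<Rightarrow> 'a set"
  assume A: "range A \<subseteq> \<B>" "disjoint_family A" "(\<Union>i. A i) \<in> \<B>"
  have "(\<Sum>i. m (A i)) = (\<Sum>n. \<Sum>i. ennreal (w n) * of_nat (p (ep n) (A i)))"
    unfolding m_def by (rule suminf_swap_ennreal)
  also have "\<dots> = (\<Sum>n. ennreal (w n) * (\<Sum>i. of_nat (p (ep n) (A i))))" by simp
  also have "\<dots> = m (\<Union>i. A i)" unfolding m_def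
    using p_ca[OF ep_pos] A unfolding countably_additive_def by simp
  finally show "(\<Sum>i. m (A i)) = m (\<Union>i. A i)" .
qed

lemma m_fin: "m X \<noteq> \<infinity>"
proof -
  have le: "m X \<le> (\<Sum>n. ennreal ((1/2)^n))" unfolding m_def
  proof (rule suminf_le[OF _ summableI summableI])
    fix n
    have "real (p (ep n) X) \<le> real (Kb (ep n)) + 1" using p_le_Kb[OF ep_pos, of n X] by simp
    hence q: "real (p (ep n) X) / (real (Kb (ep n)) + 1) \<le> 1" by (simp add: divide_le_eq_1)
    have "w n * real (p (ep n) X) = (1/2)^n * (real (p (ep n) X) / (real (Kb (ep n)) + 1))"
      unfolding w_def by simp
    also have "\<dots> \<le> (1/2)^n * 1" by (rule mult_left_mono[OF q]) simp
    finally have r: "w n * real (p (ep n) X) \<le> (1/2)^n" by simp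
    have "ennreal (w n) * of_nat (p (ep n) X) = ennreal (w n * real (p (ep n) X))"
      using w_pos[of n] by (subst ennreal_mult) (auto simp: ennreal_of_nat_eq_real_of_nat)
    also have "\<dots> \<le> ennreal ((1/2)^n)" by (rule ennreal_leI[OF r])
    finally show "ennreal (w n) * of_nat (p (ep n) X) \<le> ennreal ((1/2)^n)" .
  qed
  have nt: "(\<Sum>n. ennreal ((1/2::real)^n)) \<noteq> top"
    by (rule ennreal_suminf_neq_top) (auto intro: summable_geometric)
  show ?thesis
  proof
    assume "m X = \<infinity>"
    hence "top \<le> (\<Sum>n. ennreal ((1/2::real)^n))" using le by simp
    thus False using nt top_unique by blast
  qed
qed

lemma m_pos_iff: assumes X: "X \<in> \<B>" shows "m X > 0 \<longleftrightarrow> \<nu> X > 0"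
proof -
  have "m X > 0 \<longleftrightarrow> (\<exists>n. ennreal (w n) * of_nat (p (ep n) X) > 0)"
    unfolding m_def by (rule suminf_pos_iff) auto
  also have "\<dots> \<longleftrightarrow> (\<exists>n. p (ep n) X > 0)" using w_pos by (simp add: ennreal_zero_less_mult_iff)
  also have "\<dots> \<longleftrightarrow> (\<exists>n. ennreal (ep n) < \<nu> X)" using p_pos_iff[OF ep_pos X] by simp
  also have "\<dots> \<longleftrightarrow> \<nu> X > 0"
  proof
    assume "\<exists>n. ennreal (ep n) < \<nu> X"
    then obtain n where "ennreal (ep n) < \<nu> X" by blast
    thus "\<nu> X > 0" by (rule le_less_trans[OF zero_le])
  next
    assume pos: "\<nu> X > 0"
    show "\<exists>n. ennreal (ep n) < \<nu> X"
    proof (cases "\<nu> X")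
      case (real r)
      hence "r > 0" using pos by auto
      then obtain k where k: "k > 0" "inverse (real k) < r" using ex_inverse_of_nat_less by blast
      hence "ep (k - 1) < r" unfolding ep_def by simp
      thus ?thesis using real \<open>r > 0\<close> by (intro exI[of _ "k - 1"]) (simp add: ennreal_lessI)
    next
      case top thus ?thesis by simp
    qed
  qed
  finally show ?thesis .
qed

end

theorem proposition3p5:
  fixes E :: "'a set" and \<B> :: "'a set set" and \<nu> :: "'a set \<Rightarrow> ennreal"
  assumes "E \<noteq> {}"
    and "sigma_algebra E \<B>"
    and "sigma_maxitive E \<B> \<nu>"
    and "bounded_variation E \<B> \<nu>"
  shows "finite_maxitive \<B> \<nu> \<and> essential E \<B> \<nu>"
proof -
  interpret smv E \<B> \<nu> by (rule smv.intro[OF assms(2-4)])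
  have sa: "sigma_algebra E \<B>" by (rule assms(2))
  have fm: "finite_maxitive \<B> \<nu>" using finite_nu by (simp add: finite_maxitive_def)
  have pos: "positive \<B> m" unfolding positive_def m_def using p_empty[OF ep_pos] by simp
  have ms: "measure_space E \<B> m"
    unfolding measure_space_def using sa m_ca pos by blast
  interpret S2: sigma_algebra E \<B> by (rule sa)
  have top: "E \<in> \<B>" by (rule S2.top)
  have sp: "space (measure_of E \<B> m) = E"
    using S2.sets_into_space by (simp add: space_measure_of_conv)
  have "emeasure (measure_of E \<B> m) E = m E"
    by (rule emeasure_measure_of_sigma[OF sa pos m_ca top])
  hence "finite_measure (measure_of E \<B> m)"
    using m_fin by (intro finite_measureI) (simp add: sp)
  hence sf: "sigma_finite_measure (measure_of E \<B> m)"
    by (simp add: finite_measure_def)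
  have "essential E \<B> \<nu>" unfolding essential_def
    by (intro exI[of _ m] conjI ms sf ballI) (simp add: m_pos_iff)
  with fm show ?thesis by simp
qed

end
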